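(* For every positive integer $n$, the Aztec diamond $\operatorname{AD}(n)$ has no 180-cover.
   Context: A cell is a unit square $[i,i+1]\times[j,j+1]$ with $i,j\in\mathbb{Z}$, labelled $(i,j)$. The right-oriented trominoes are the translates of $\{(0,0),(1,0),(1,1)\}$ and of $\{(0,0),(0,1),(1,1)\}$; the left-oriented trominoes are the translates of $\{(0,1),(1,0),(1,1)\}$ and of $\{(0,0),(0,1),(1,0)\}$. A 180-cover of a region $R$ is a partition of $R$ into trominoes which are either all right-oriented or all left-oriented. The Aztec diamond $\operatorname{AD}(n)$ is the union of the cells $[a,a+1]\times[b,b+1]$, $a,b\in\mathbb{Z}$, lying completely inside $\{(x,y): |x|+|y|\le n+1\}$. *)

theory Defs
  imports Complex_Main
begin

type_synonym cell = "int \<times> int"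

definition translate :: "cell \<Rightarrow> cell set \<Rightarrow> cell set" where
  "translate v S = (\<lambda>(x, y). (x + fst v, y + snd v)) ` S"

definition right_tromino :: "cell set \<Rightarrow> bool" where
  "right_tromino t \<longleftrightarrow> (\<exists>v. t = translate v {(0,0),(1,0),(1,1)} \<or> t = translate v {(0,0),(0,1),(1,1)})"

definition left_tromino :: "cell set \<Rightarrow> bool" where
  "left_tromino t \<longleftrightarrow> (\<exists>v. t = translate v {(0,1),(1,0),(1,1)} \<or> t = translate v {(0,0),(0,1),(1,0)})"

definition is_partition :: "cell set \<Rightarrow> cell set set \<Rightarrow> bool" where
  "is_partition R T \<longleftrightarrow> \<Union>T = R \<and> (\<forall>t\<in>T. \<forall>t'\<in>T. t \<noteq> t' \<longrightarrow> t \<inter> t' = {})"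

definition cover180 :: "cell set \<Rightarrow> bool" where
  "cover180 R \<longleftrightarrow> (\<exists>T. is_partition R T \<and>
      ((\<forall>t\<in>T. right_tromino t) \<or> (\<forall>t\<in>T. left_tromino t)))"

text \<open>Cell (a,b) is the unit square [a,a+1] x [b,b+1]; AD(n) consists of cells lying
  completely inside |x|+|y| <= n+1.\<close>
definition aztec_diamond :: "nat \<Rightarrow> cell set" where
  "aztec_diamond n = {(a, b). \<forall>x y :: real.
      real_of_int a \<le> x \<and> x \<le> real_of_int a + 1 \<and> real_of_int b \<le> y \<and> y \<le> real_of_int b + 1
      \<longrightarrow> \<bar>x\<bar> + \<bar>y\<bar> \<le> real n + 1}"

end

theory Submission imports Defs begin
definition g :: "int \<Rightarrow> int" where "g s = (if s mod 3 = 2 then 2 else -1)"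
lemma g3: "g s + g (s+1) + g (s+2) = 0"
  unfolding g_def by presburger
lemma g_interval: "lo \<le> hi \<Longrightarrow> (\<Sum>a\<in>{lo..<hi}. g (a + c)) = (lo + c) mod 3 - (hi + c) mod 3"
proof (induction hi rule: int_ge_induct)
  case base
  then show ?case by simp
next
  case (step i)
  have "{lo..<i+1} = insert i {lo..<i}" using step by auto
  then have "(\<Sum>a\<in>{lo..<i+1}. g (a + c)) = g (i + c) + (\<Sum>a\<in>{lo..<i}. g (a + c))" by simp
  also have "\<dots> = (lo + c) mod 3 - (i + 1 + c) mod 3" using step unfolding g_def by presburger
  finally show ?case by (simp add: algebra_simps)
qed
lemma right_sum: "right_tromino t \<Longrightarrow> (\<Sum>c\<in>t. g (fst c + snd c)) = 0"
  unfolding right_tromino_def translate_def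
  apply (elim exE disjE)
  subgoal for v using g3[of "fst v + snd v"] by (cases v) (simp add: algebra_simps)
  subgoal for v using g3[of "fst v + snd v"] by (cases v) (simp add: algebra_simps)
  done
lemma left_sum: "left_tromino t \<Longrightarrow> (\<Sum>c\<in>t. g (fst c - snd c)) = 0"
  unfolding left_tromino_def translate_def
  apply (elim exE disjE)
  subgoal for v using g3[of "fst v - snd v - 1"] by (cases v) (simp add: algebra_simps)
  subgoal for v using g3[of "fst v - snd v - 1"] by (cases v) (simp add: algebra_simps)
  done
lemma part_sum:
  assumes "is_partition R T" "finite R"
  shows "sum f R = (\<Sum>t\<in>T. sum f t)"
proof -
  have U: "\<Union>T = R" and D: "\<forall>t\<in>T. \<forall>t'\<in>T. t \<noteq> t' \<longrightarrow> t \<inter> t' = {}"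
    using assms(1) unfolding is_partition_def by auto
  have "T \<subseteq> Pow R" using U by auto
  then have fT: "finite T" using assms(2) by (meson finite_Pow_iff finite_subset)
  have fe: "\<forall>t\<in>T. finite t" using U assms(2) by (metis Union_upper finite_subset)
  have "sum f (\<Union>T) = (sum (sum f) T)"
    using sum.Union_disjoint[OF fe D] fT by (simp add: comp_def)
  then show ?thesis using U by simp
qed

definition hw :: "int \<Rightarrow> int" where "hw x = (if x \<ge> 0 then x + 1 else - x)"

lemma AD_char: "(a,b) \<in> aztec_diamond n \<longleftrightarrow> hw a + hw b \<le> int n + 1"
proof
  assume H: "(a,b) \<in> aztec_diamond n"
  define x where "x = (if a \<ge> 0 then a + 1 else a)"
  define y where "y = (if b \<ge> 0 then b + 1 else b)"
  have "\<bar>real_of_int x\<bar> + \<bar>real_of_int y\<bar> \<le> real n + 1"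
    using H unfolding aztec_diamond_def x_def y_def by auto
  then have "real_of_int (\<bar>x\<bar> + \<bar>y\<bar>) \<le> real_of_int (int n + 1)" by simp
  then have "\<bar>x\<bar> + \<bar>y\<bar> \<le> int n + 1" by linarith
  then show "hw a + hw b \<le> int n + 1" unfolding hw_def x_def y_def by (auto split: if_splits)
next
  assume H: "hw a + hw b \<le> int n + 1"
  have k: "\<bar>x\<bar> \<le> real_of_int (hw c)" if "real_of_int c \<le> x" "x \<le> real_of_int c + 1" for c x
  proof (cases "c \<ge> 0")
    case True
    then have "real_of_int c \<ge> 0" by simp
    then show ?thesis using that True unfolding hw_def by auto
  next
    case False
    then have "real_of_int c \<le> -1" by simp
    then show ?thesis using that False unfolding hw_def by auto
  qed
  have "real_of_int (hw a + hw b) \<le> real_of_int (int n + 1)" using H by linarith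
  then have H': "real_of_int (hw a) + real_of_int (hw b) \<le> real n + 1" by simp
  show "(a,b) \<in> aztec_diamond n"
    unfolding aztec_diamond_def
  proof (clarsimp)
    fix x y :: real
    assume "real_of_int a \<le> x" "x \<le> real_of_int a + 1" "real_of_int b \<le> y" "y \<le> real_of_int b + 1"
    then have "\<bar>x\<bar> \<le> real_of_int (hw a)" "\<bar>y\<bar> \<le> real_of_int (hw b)" using k by auto
    then show "\<bar>x\<bar> + \<bar>y\<bar> \<le> real n + 1" using H' by linarith
  qed
qed

definition A :: "nat \<Rightarrow> nat \<Rightarrow> int set" where "A n i = {-(int n - int i)..<int n - int i}"

lemma AD_split: "aztec_diamond n = (\<lambda>(i,a). (a, int i)) ` (SIGMA i:{..<n}. A n i) \<union> (\<lambda>(i,a). (a, -1 - int i)) ` (SIGMA i:{..<n}. A n i)"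
proof (rule set_eqI)
  fix c :: "int \<times> int"
  obtain a b where c: "c = (a,b)" by fastforce
  show "c \<in> aztec_diamond n \<longleftrightarrow> c \<in> (\<lambda>(i,a). (a, int i)) ` (SIGMA i:{..<n}. A n i) \<union> (\<lambda>(i,a). (a, -1 - int i)) ` (SIGMA i:{..<n}. A n i)"
  proof
    assume "c \<in> aztec_diamond n"
    then have H: "hw a + hw b \<le> int n + 1" using c AD_char by simp
    show "c \<in> (\<lambda>(i,a). (a, int i)) ` (SIGMA i:{..<n}. A n i) \<union> (\<lambda>(i,a). (a, -1 - int i)) ` (SIGMA i:{..<n}. A n i)"
    proof (cases "b \<ge> 0")
      case True
      have "(nat b, a) \<in> (SIGMA i:{..<n}. A n i)" using H True unfolding A_def hw_def by (auto split: if_splits)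
      moreover have "c = (\<lambda>(i,a). (a, int i)) (nat b, a)" using c True by simp
      ultimately show ?thesis by blast
    next
      case False
      have "(nat (-1 - b), a) \<in> (SIGMA i:{..<n}. A n i)" using H False unfolding A_def hw_def by (auto split: if_splits)
      moreover have "c = (\<lambda>(i,a). (a, -1 - int i)) (nat (-1 - b), a)" using c False by simp
      ultimately show ?thesis by blast
    qed
  next
    assume "c \<in> (\<lambda>(i,a). (a, int i)) ` (SIGMA i:{..<n}. A n i) \<union> (\<lambda>(i,a). (a, -1 - int i)) ` (SIGMA i:{..<n}. A n i)"
    then show "c \<in> aztec_diamond n" unfolding AD_char A_def
      by (auto simp: AD_char hw_def)
  qed
qed
lemma AD_sum: "sum F (aztec_diamond n) = (\<Sum>i<n. \<Sum>a\<in>A n i. F (a, int i) + F (a, -1 - int i))"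
proof -
  let ?S = "SIGMA i:{..<n}. A n i"
  have fS: "finite ?S" unfolding A_def by auto
  have i1: "inj_on (\<lambda>(i,a). (a, int i)) ?S" by (auto simp: inj_on_def)
  have i2: "inj_on (\<lambda>(i,a). (a, -1 - int i)) ?S" by (auto simp: inj_on_def)
  have d: "(\<lambda>(i,a). (a, int i)) ` ?S \<inter> (\<lambda>(i,a). (a, -1 - int i)) ` ?S = {}" by auto
  have "sum F (aztec_diamond n) = sum F ((\<lambda>(i,a). (a, int i)) ` ?S) + sum F ((\<lambda>(i,a). (a, -1 - int i)) ` ?S)"
    unfolding AD_split using fS d by (simp add: sum.union_disjoint)
  also have "\<dots> = (\<Sum>(i,a)\<in>?S. F (a, int i)) + (\<Sum>(i,a)\<in>?S. F (a, -1 - int i))"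
    by (subst sum.reindex[OF i1], subst sum.reindex[OF i2]) (simp add: comp_def case_prod_unfold)
  also have "\<dots> = (\<Sum>i<n. \<Sum>a\<in>A n i. F (a, int i)) + (\<Sum>i<n. \<Sum>a\<in>A n i. F (a, -1 - int i))"
    by (simp add: sum.Sigma A_def)
  also have "\<dots> = (\<Sum>i<n. \<Sum>a\<in>A n i. F (a, int i) + F (a, -1 - int i))"
    by (simp add: sum.distrib)
  finally show ?thesis .
qed

definition fjz :: "int \<Rightarrow> int \<Rightarrow> nat \<Rightarrow> int" where
  "fjz N j i = (2*int i + j - N) mod 3 - (j + N) mod 3 + (j - 1 - N) mod 3 - (j - 1 - 2*int i + N) mod 3"

definition fj :: "nat \<Rightarrow> int \<Rightarrow> nat \<Rightarrow> int" where
  "fj n j i = fjz (int n) j i"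

lemma G_formula: "(\<Sum>c\<in>aztec_diamond n. g (fst c + snd c + j)) = (\<Sum>i<n. fj n j i)"
proof -
  have "(\<Sum>c\<in>aztec_diamond n. g (fst c + snd c + j)) = (\<Sum>i<n. \<Sum>a\<in>A n i. g (a + (int i + j)) + g (a + (-1 - int i + j)))"
    unfolding AD_sum by (simp add: algebra_simps)
  also have "\<dots> = (\<Sum>i<n. fj n j i)"
  proof (rule sum.cong[OF refl])
    fix i assume "i \<in> {..<n}"
    then have le: "-(int n - int i) \<le> int n - int i" by simp
    show "(\<Sum>a\<in>A n i. g (a + (int i + j)) + g (a + (-1 - int i + j))) = fj n j i"
      unfolding sum.distrib A_def g_interval[OF le] fj_def fjz_def by (simp add: algebra_simps)
  qed
  finally show ?thesis .
qed

lemma three_consec: assumes "\<forall>i. f (Suc (Suc (Suc i))) = (f i :: int)"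
  shows "f m + f (Suc m) + f (Suc (Suc m)) = f 0 + f 1 + f 2"
  using assms by (induction m) (auto simp: numeral_2_eq_2 algebra_simps)

lemma sum_periodic: assumes "\<forall>i. f (Suc (Suc (Suc i))) = (f i :: int)"
  shows "(\<Sum>i<N. f i) = int (N div 3) * (f 0 + f 1 + f 2) + (\<Sum>i<N mod 3. f i)"
proof (induction N rule: less_induct)
  case (less N)
  show ?case
  proof (cases "N < 3")
    case True then show ?thesis by simp
  next
    case False
    define M where "M = N - 3"
    have M: "N = Suc (Suc (Suc M))" using False unfolding M_def by arith
    have "(\<Sum>i<N. f i) = (\<Sum>i<M. f i) + (f M + f (Suc M) + f (Suc (Suc M)))" using M by simp
    also have "\<dots> = (\<Sum>i<M. f i) + (f 0 + f 1 + f 2)" using three_consec[OF assms, of M] by linarith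
    also have "\<dots> = int (M div 3) * (f 0 + f 1 + f 2) + (\<Sum>i<M mod 3. f i) + (f 0 + f 1 + f 2)"
      using less.IH[of M] M by (simp only: lessI less_SucI)
    also have "\<dots> = int (N div 3) * (f 0 + f 1 + f 2) + (\<Sum>i<N mod 3. f i)"
      using M by (simp add: algebra_simps)
    finally show ?thesis .
  qed
qed
lemma fjz_per: "fjz N j (Suc (Suc (Suc i))) = fjz N j i"
proof -
  have e: "int (Suc (Suc (Suc i))) = int i + 3" by simp
  have 1: "(2*(int i + 3) + j - N) mod 3 = (2*int i + j - N) mod 3"
    using mod_add_self2[of "2*int i + j - N" 3] mod_add_self2[of "2*int i + j - N + 3" 3] by (simp add: algebra_simps)
  have 2: "(j - 1 - 2*(int i + 3) + N) mod 3 = (j - 1 - 2*int i + N) mod 3"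
    using mod_add_self2[of "j - 1 - 2*int i + N - 6" 3] mod_add_self2[of "j - 1 - 2*int i + N - 3" 3] by (simp add: algebra_simps)
  show ?thesis unfolding fjz_def e using 1 2 by simp
qed

lemma fj_per: "\<forall>i. fj n j (Suc (Suc (Suc i))) = fj n j i"
  unfolding fj_def using fjz_per by simp

lemma fjz_mod: "fjz N j i = fjz (N mod 3) j i"
  unfolding fjz_def mod_add_right_eq mod_diff_right_eq ..

lemma G_nonzero:
  assumes "n \<ge> 1" "j = 0 \<or> j = 1"
  shows "(\<Sum>i<n. fj n j i) \<noteq> 0"
proof -
  define k where "k = n div 3"
  define r where "r = n mod 3"
  have fz: "fj n j i = fjz (int r) j i" for i
    unfolding fj_def r_def by (subst fjz_mod) (simp add: zmod_int)
  have S: "(\<Sum>i<n. fj n j i) = int k * (fj n j 0 + fj n j 1 + fj n j 2) + (\<Sum>i<r. fj n j i)"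
    unfolding k_def r_def by (rule sum_periodic[OF fj_per])
  have "r = 0 \<or> r = 1 \<or> r = 2" unfolding r_def by auto
  moreover have "k \<ge> 1 \<or> r \<noteq> 0" using assms(1) unfolding k_def r_def by auto
  ultimately have "int k * (fjz (int r) j 0 + fjz (int r) j 1 + fjz (int r) j 2) + (\<Sum>i<r. fjz (int r) j i) \<noteq> 0"
    using assms(2) by (auto simp: numeral_2_eq_2 lessThan_Suc fjz_def)
  moreover have "fj n j = fjz (int r) j" using fz by (rule ext)
  ultimately show ?thesis unfolding S by simp
qed
lemma AD_finite: "finite (aztec_diamond n)"
  unfolding AD_split A_def by auto

lemma AD_refl: "(a, -1 - b) \<in> aztec_diamond n \<longleftrightarrow> (a, b) \<in> aztec_diamond n"
  unfolding AD_char hw_def by auto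

lemma left_to_right: "(\<Sum>c\<in>aztec_diamond n. g (fst c - snd c)) = (\<Sum>c\<in>aztec_diamond n. g (fst c + snd c + 1))"
proof (rule sum.reindex_bij_witness[of _ "\<lambda>(a,b). (a, -1 - b)" "\<lambda>(a,b). (a, -1 - b)"])
qed (auto simp: AD_refl algebra_simps)

theorem corollary5:
  fixes n :: nat
  assumes "n \<ge> 1"
  shows "\<not> cover180 (aztec_diamond n)"
proof
  assume "cover180 (aztec_diamond n)"
  then obtain T where P: "is_partition (aztec_diamond n) T"
    and RL: "(\<forall>t\<in>T. right_tromino t) \<or> (\<forall>t\<in>T. left_tromino t)"
    unfolding cover180_def by blast
  from RL show False
  proof
    assume R: "\<forall>t\<in>T. right_tromino t"
    have "(\<Sum>c\<in>aztec_diamond n. g (fst c + snd c)) = (\<Sum>t\<in>T. \<Sum>c\<in>t. g (fst c + snd c))"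
      by (rule part_sum[OF P AD_finite])
    also have "\<dots> = 0" using R right_sum by simp
    finally have "(\<Sum>c\<in>aztec_diamond n. g (fst c + snd c + 0)) = 0" by simp
    then have "(\<Sum>i<n. fj n 0 i) = 0" unfolding G_formula .
    then show False using G_nonzero[OF assms] by simp
  next
    assume L: "\<forall>t\<in>T. left_tromino t"
    have "(\<Sum>c\<in>aztec_diamond n. g (fst c - snd c)) = (\<Sum>t\<in>T. \<Sum>c\<in>t. g (fst c - snd c))"
      by (rule part_sum[OF P AD_finite])
    also have "\<dots> = 0" using L left_sum by simp
    finally have "(\<Sum>c\<in>aztec_diamond n. g (fst c + snd c + 1)) = 0" unfolding left_to_right .
    then have "(\<Sum>i<n. fj n 1 i) = 0" unfolding G_formula .
    then show False using G_nonzero[OF assms] by simp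
  qed
qed
end
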